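(* Let $\mathcal{A}$ and $\mathcal{B}$ be unital $C^*$-algebras with units denoted $I$, and let $\Phi:\mathcal{A}\to\mathcal{B}$ be a positive linear map such that $\Phi(I)$ is invertible. Then \[ \Phi(A^*A)-\Phi(A)^*\Phi(I)^{-1}\Phi(A)\leq \Phi(|A-\alpha I|^2) \] for all $A\in\mathcal{A}$ and all $\alpha\in\mathbb{C}$.
   Context: For $X$ in a $C^*$-algebra, $|X|=(X^*X)^{1/2}$. *)

theory Defs
  imports "HOL-Analysis.Analysis"
begin

class cstar_algebra = banach + real_normed_algebra_1 +
  fixes cscale :: "complex \<Rightarrow> 'a \<Rightarrow> 'a"
    and adj :: "'a \<Rightarrow> 'a"
  assumes cscale_of_real: "cscale (complex_of_real r) x = scaleR r x"
    and cscale_add_right: "cscale c (x + y) = cscale c x + cscale c y"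
    and cscale_add_left: "cscale (c + d) x = cscale c x + cscale d x"
    and cscale_cscale: "cscale c (cscale d x) = cscale (c * d) x"
    and cscale_one: "cscale 1 x = x"
    and norm_cscale: "norm (cscale c x) = norm c * norm x"
    and cscale_mult_left: "cscale c x * y = cscale c (x * y)"
    and cscale_mult_right: "x * cscale c y = cscale c (x * y)"
    and adj_adj: "adj (adj x) = x"
    and adj_add: "adj (x + y) = adj x + adj y"
    and adj_cscale: "adj (cscale c x) = cscale (cnj c) (adj x)"
    and adj_mult: "adj (x * y) = adj y * adj x"
    and cstar_identity: "norm (adj x * x) = (norm x)\<^sup>2"

definition cinvertible :: "'a::cstar_algebra \<Rightarrow> bool" where
  "cinvertible x \<longleftrightarrow> (\<exists>y. x * y = 1 \<and> y * x = 1)"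

definition cinv :: "'a::cstar_algebra \<Rightarrow> 'a" where
  "cinv x = (THE y. x * y = 1 \<and> y * x = 1)"

definition cspectrum :: "'a::cstar_algebra \<Rightarrow> complex set" where
  "cspectrum a = {z. \<not> cinvertible (a - cscale z 1)}"

definition cpositive :: "'a::cstar_algebra \<Rightarrow> bool" where
  "cpositive a \<longleftrightarrow> adj a = a \<and> cspectrum a \<subseteq> complex_of_real ` {0..}"

definition cle :: "'a::cstar_algebra \<Rightarrow> 'a \<Rightarrow> bool" where
  "cle x y \<longleftrightarrow> cpositive (y - x)"

definition positive_linear_map :: "('a::cstar_algebra \<Rightarrow> 'b::cstar_algebra) \<Rightarrow> bool" where
  "positive_linear_map \<Phi> \<longleftrightarrow>
     (\<forall>x y. \<Phi> (x + y) = \<Phi> x + \<Phi> y) \<and>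
     (\<forall>c x. \<Phi> (cscale c x) = cscale c (\<Phi> x)) \<and>
     (\<forall>x. cpositive x \<longrightarrow> cpositive (\<Phi> x))"

end

theory Submission
  imports Defs "HOL-Computational_Algebra.Formal_Power_Series"
begin

lemma cscale_zero_left[simp]: "cscale 0 (x::'a::cstar_algebra) = 0"
  using cscale_of_real[of 0 x] by simp

lemma cscale_zero_right[simp]: "cscale c (0::'a::cstar_algebra) = 0"
  using cscale_add_right[of c "0::'a" 0] by simp

lemma cscale_minus_left: "cscale (-c) (x::'a::cstar_algebra) = - cscale c x"
  using cscale_add_left[of c "-c" x] by (metis add.right_inverse cscale_zero_left minus_unique)

lemma cscale_minus_right: "cscale c (-x::'a::cstar_algebra) = - cscale c x"
  using cscale_add_right[of c x "-x"] by (metis add.right_inverse cscale_zero_right minus_unique)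

lemma cscale_diff_left: "cscale (c - d) (x::'a::cstar_algebra) = cscale c x - cscale d x"
  using cscale_add_left[of c "-d" x] by (simp add: cscale_minus_left)

lemma cscale_diff_right: "cscale c (x - y::'a::cstar_algebra) = cscale c x - cscale c y"
  using cscale_add_right[of c x "-y"] by (simp add: cscale_minus_right)

lemma cscale_real: "cscale (complex_of_real r) (x::'a::cstar_algebra) = r *\<^sub>R x"
  by (rule cscale_of_real)

lemma cscale_one_mult: "cscale c 1 * (x::'a::cstar_algebra) = cscale c x"
  by (simp add: cscale_mult_left)

lemma mult_cscale_one: "(x::'a::cstar_algebra) * cscale c 1 = cscale c x"
  by (simp add: cscale_mult_right)

lemma cscale_scaleR: "cscale c (r *\<^sub>R (x::'a::cstar_algebra)) = cscale (c * of_real r) x"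
  by (metis cscale_cscale cscale_of_real)

lemma scaleR_cscale: "r *\<^sub>R cscale c (x::'a::cstar_algebra) = cscale (of_real r * c) x"
  by (metis cscale_cscale cscale_of_real)

lemma adj_zero[simp]: "adj (0::'a::cstar_algebra) = 0"
  using adj_add[of "0::'a" 0] by simp

lemma adj_minus: "adj (- x::'a::cstar_algebra) = - adj x"
  using adj_add[of x "-x"] by (metis add.right_inverse adj_zero minus_unique)

lemma adj_diff: "adj (x - y::'a::cstar_algebra) = adj x - adj y"
  using adj_add[of x "-y"] by (simp add: adj_minus)

lemma adj_one[simp]: "adj (1::'a::cstar_algebra) = 1"
proof -
  have "adj (adj 1 * (1::'a)) = adj 1 * adj (adj 1)" by (rule adj_mult)
  then show ?thesis by (simp add: adj_adj)
qed

lemma adj_scaleR: "adj (r *\<^sub>R (x::'a::cstar_algebra)) = r *\<^sub>R adj x"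
  by (metis adj_cscale cscale_of_real complex_cnj_complex_of_real)

lemma adj_cscale_one: "adj (cscale c (1::'a::cstar_algebra)) = cscale (cnj c) 1"
  by (simp add: adj_cscale)

lemma norm_adj: "norm (adj (x::'a::cstar_algebra)) = norm x"
proof -
  have le: "norm y \<le> norm (adj y)" for y :: 'a
  proof (cases "y = 0")
    case False
    have "(norm y)^2 = norm (adj y * y)" by (simp add: cstar_identity)
    also have "\<dots> \<le> norm (adj y) * norm y" by (rule norm_mult_ineq)
    finally show ?thesis using False by (simp add: power2_eq_square)
  qed simp
  show ?thesis using le[of x] le[of "adj x"] by (simp add: adj_adj)
qed

lemma adj_power: "adj ((x::'a::cstar_algebra) ^ n) = adj x ^ n"
  by (induction n) (simp_all add: adj_mult power_commutes)

lemma bounded_linear_adj: "bounded_linear (adj :: 'a::cstar_algebra \<Rightarrow> 'a)"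
  by (rule bounded_linear_intro[where K=1]) (simp_all add: adj_add adj_scaleR norm_adj)

lemma norm_cscale_one: "norm (cscale c (1::'a::cstar_algebra)) = norm c"
  by (simp add: norm_cscale)

lemma adj_selfadj_sq: "adj (x::'a::cstar_algebra) = x \<Longrightarrow> norm (x * x) = (norm x)^2"
  using cstar_identity[of x] by simp

lemma commute_power: "(a::'a::ring_1) * b = b * a \<Longrightarrow> a * b ^ n = b ^ n * a"
  by (induction n) (simp_all, metis mult.assoc)

lemma cinv_unique: "(x::'a::cstar_algebra) * y = 1 \<Longrightarrow> y * x = 1 \<Longrightarrow> cinv x = y"
  unfolding cinv_def
proof (rule the_equality)
  fix y' assume "x * y = 1" "y * x = 1" "x * y' = 1 \<and> y' * x = 1"
  then show "y' = y" by (metis mult.assoc mult_1_left mult_1_right)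
qed auto

lemma cinvertibleI: "(x::'a::cstar_algebra) * y = 1 \<Longrightarrow> y * x = 1 \<Longrightarrow> cinvertible x"
  unfolding cinvertible_def by blast

lemma cinvertibleI2: "(x::'a::cstar_algebra) * y = 1 \<Longrightarrow> z * x = 1 \<Longrightarrow> cinvertible x"
  by (metis cinvertibleI mult.assoc mult_1_left mult_1_right)

lemma cinv_left: "cinvertible (x::'a::cstar_algebra) \<Longrightarrow> cinv x * x = 1"
  unfolding cinvertible_def using cinv_unique by metis

lemma cinv_right: "cinvertible (x::'a::cstar_algebra) \<Longrightarrow> x * cinv x = 1"
  unfolding cinvertible_def using cinv_unique by metis

lemma cinvertible_cinv: "cinvertible (x::'a::cstar_algebra) \<Longrightarrow> cinvertible (cinv x)"
  using cinv_left cinv_right cinvertibleI by metis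

lemma cinv_cinv: "cinvertible (x::'a::cstar_algebra) \<Longrightarrow> cinv (cinv x) = x"
  using cinv_left cinv_right cinv_unique by metis

lemma cinvertible_mult: "cinvertible (x::'a::cstar_algebra) \<Longrightarrow> cinvertible y \<Longrightarrow> cinvertible (x * y)"
  by (rule cinvertibleI[where y="cinv y * cinv x"])
     (simp_all add: mult.assoc cinv_left cinv_right,
      metis cinv_right mult.assoc mult_1_left, metis cinv_left mult.assoc mult_1_left)

lemma cinv_mult: "cinvertible (x::'a::cstar_algebra) \<Longrightarrow> cinvertible y \<Longrightarrow> cinv (x * y) = cinv y * cinv x"
  by (rule cinv_unique)
     (metis cinv_right mult.assoc mult_1_left, metis cinv_left mult.assoc mult_1_left)

lemma cinvertible_one[simp]: "cinvertible (1::'a::cstar_algebra)"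
  by (rule cinvertibleI[of 1 1]) simp_all

lemma cinvertible_commute_factor:
  assumes "(p::'a::cstar_algebra) * q = q * p" "cinvertible (p * q)"
  shows "cinvertible p"
proof -
  let ?w = "cinv (p * q)"
  have "p * (q * ?w) = 1" using cinv_right[OF assms(2)] by (simp add: mult.assoc)
  moreover have "(?w * q) * p = 1" using cinv_left[OF assms(2)] assms(1) by (simp add: mult.assoc)
  ultimately show ?thesis by (rule cinvertibleI2)
qed

lemma cinvertible_cscale: "c \<noteq> 0 \<Longrightarrow> cinvertible (x::'a::cstar_algebra) \<Longrightarrow> cinvertible (cscale c x)"
  by (rule cinvertibleI[where y="cscale (inverse c) (cinv x)"])
     (simp_all add: cscale_mult_left cscale_mult_right cscale_cscale cinv_left cinv_right cscale_one)

lemma cinvertible_cscale_iff: "c \<noteq> 0 \<Longrightarrow> cinvertible (cscale c (x::'a::cstar_algebra)) \<longleftrightarrow> cinvertible x"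
  using cinvertible_cscale[of c x] cinvertible_cscale[of "inverse c" "cscale c x"]
  by (auto simp: cscale_cscale cscale_one)

lemma cinvertible_minus: "cinvertible (- (x::'a::cstar_algebra)) \<longleftrightarrow> cinvertible x"
  using cinvertible_cscale_iff[of "-1" x] by (simp add: cscale_minus_left cscale_one)

lemma cinvertible_adj: "cinvertible (x::'a::cstar_algebra) \<Longrightarrow> cinvertible (adj x)"
  by (rule cinvertibleI[where y="adj (cinv x)"])
     (metis adj_mult adj_one cinv_left, metis adj_mult adj_one cinv_right)

lemma cinv_adj: "cinvertible (x::'a::cstar_algebra) \<Longrightarrow> cinv (adj x) = adj (cinv x)"
  by (rule cinv_unique) (metis adj_mult adj_one cinv_left, metis adj_mult adj_one cinv_right)


lemma geom_mult1: "(1 - (y::'a::ring_1)) * (\<Sum>n<N. y^n) = 1 - y^N"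
proof (induction N)
  case (Suc N)
  have "(1 - y) * (\<Sum>n<Suc N. y^n) = (1 - y) * (\<Sum>n<N. y^n) + (1 - y) * y^N" by (simp add: distrib_left)
  also have "\<dots> = 1 - y^N + (y^N - y^Suc N)" using Suc by (simp add: left_diff_distrib)
  finally show ?case by simp
qed simp

lemma geom_mult2: "(\<Sum>n<N. y^n) * (1 - (y::'a::ring_1)) = 1 - y^N"
proof (induction N)
  case (Suc N)
  have "(\<Sum>n<Suc N. y^n) * (1 - y) = (\<Sum>n<N. y^n) * (1 - y) + y^N * (1 - y)" by (simp add: distrib_right)
  also have "\<dots> = 1 - y^N + (y^N - y^Suc N)" using Suc by (simp add: right_diff_distrib power_Suc2 power_commutes)
  finally show ?case by simp
qed simp

lemma neumann:
  fixes y :: "'a::cstar_algebra"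
  assumes "norm y < 1"
  shows "cinvertible (1 - y) \<and> norm (cinv (1 - y) - 1) \<le> norm y / (1 - norm y)"
proof -
  have sg: "summable (\<lambda>n. norm y ^ n)" using assms by (simp add: summable_geometric)
  have sn: "summable (\<lambda>n. norm (y ^ n))"
    by (rule summable_comparison_test[OF _ sg]) (simp add: norm_power_ineq)
  hence s: "summable (\<lambda>n. y ^ n)" by (rule summable_norm_cancel)
  define S where "S = (\<Sum>n. y ^ n)"
  have lim: "(\<lambda>N. \<Sum>n<N. y^n) \<longlonglongrightarrow> S" unfolding S_def using s by (rule summable_LIMSEQ)
  have p0: "(\<lambda>N. y ^ N) \<longlonglongrightarrow> 0"
  proof (rule Lim_null_comparison[where g="\<lambda>N. norm y ^ N"])
    show "\<forall>\<^sub>F x in sequentially. norm (y ^ x) \<le> norm y ^ x" by (simp add: norm_power_ineq)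
    show "(\<lambda>N. norm y ^ N) \<longlonglongrightarrow> 0" using assms by (simp add: LIMSEQ_power_zero)
  qed
  have l1: "(\<lambda>N. 1 - y ^ N) \<longlonglongrightarrow> 1" using tendsto_diff[OF tendsto_const p0, of 1] by simp
  have "(\<lambda>N. (1 - y) * (\<Sum>n<N. y^n)) \<longlonglongrightarrow> (1 - y) * S" by (intro tendsto_mult tendsto_const lim)
  hence "(\<lambda>N. 1 - y ^ N) \<longlonglongrightarrow> (1 - y) * S" by (simp only: geom_mult1 geom_mult2)
  hence r: "(1 - y) * S = 1" using l1 LIMSEQ_unique by blast
  have "(\<lambda>N. (\<Sum>n<N. y^n) * (1 - y)) \<longlonglongrightarrow> S * (1 - y)" by (intro tendsto_mult tendsto_const lim)
  hence "(\<lambda>N. 1 - y ^ N) \<longlonglongrightarrow> S * (1 - y)" by (simp only: geom_mult1 geom_mult2)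
  hence l: "S * (1 - y) = 1" using l1 LIMSEQ_unique by blast
  have inv: "cinvertible (1 - y)" using r l by (rule cinvertibleI)
  have ci: "cinv (1 - y) = S" using r l by (rule cinv_unique)
  have "S - 1 = (\<Sum>n. y ^ Suc n)" unfolding S_def using suminf_split_head[OF s] by simp
  also have "norm \<dots> \<le> (\<Sum>n. norm y ^ Suc n)"
  proof (rule norm_suminf_le)
    show "norm (y ^ Suc n) \<le> norm y ^ Suc n" for n by (rule norm_power_ineq)
    show "summable (\<lambda>n. norm y ^ Suc n)" using summable_mult[OF sg, of "norm y"] by simp
  qed
  also have "\<dots> = norm y * (\<Sum>n. norm y ^ n)" 
    by (subst suminf_mult[OF sg, symmetric]) simp
  also have "\<dots> = norm y / (1 - norm y)" using assms by (simp add: suminf_geometric divide_simps)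
  finally show ?thesis using inv ci by simp
qed

lemma neumann_norm:
  fixes y :: "'a::cstar_algebra"
  assumes "norm y < 1"
  shows "norm (cinv (1 - y)) \<le> 1 / (1 - norm y)"
proof -
  have "norm (cinv (1 - y)) \<le> norm (cinv (1 - y) - 1) + norm (1::'a)"
    by (metis norm_triangle_ineq4 diff_add_cancel norm_triangle_ineq)
  also have "\<dots> \<le> norm y / (1 - norm y) + 1" using neumann[OF assms] by simp
  also have "\<dots> = 1 / (1 - norm y)" using assms by (simp add: divide_simps)
  finally show ?thesis .
qed

lemma inv_perturb:
  fixes a b :: "'a::cstar_algebra"
  assumes a: "cinvertible a" and small: "norm (cinv a) * norm (b - a) < 1"
  shows "cinvertible b \<and> norm (cinv b - cinv a) \<le>
           norm (cinv a) * (norm (cinv a) * norm (b - a) / (1 - norm (cinv a) * norm (b - a)))"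
proof -
  define y where "y = cinv a * (a - b)"
  have ny: "norm y \<le> norm (cinv a) * norm (b - a)"
    unfolding y_def using norm_mult_ineq[of "cinv a" "a - b"] by (simp add: norm_minus_commute)
  hence ny1: "norm y < 1" using small by simp
  have b: "b = a * (1 - y)" unfolding y_def
    by (simp add: algebra_simps mult.assoc[symmetric] cinv_right[OF a])
  from neumann[OF ny1] have i1: "cinvertible (1 - y)" and n1: "norm (cinv (1 - y) - 1) \<le> norm y / (1 - norm y)" by auto
  have ib: "cinvertible b" using b cinvertible_mult[OF a i1] by simp
  have cb: "cinv b = cinv (1 - y) * cinv a" using b cinv_mult[OF a i1] by simp
  have "cinv b - cinv a = (cinv (1 - y) - 1) * cinv a" using cb by (simp add: algebra_simps)
  hence "norm (cinv b - cinv a) \<le> norm (cinv (1 - y) - 1) * norm (cinv a)"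
    by (simp add: norm_mult_ineq)
  also have "\<dots> \<le> (norm y / (1 - norm y)) * norm (cinv a)"
    by (rule mult_right_mono[OF n1]) simp
  also have "norm y / (1 - norm y) \<le> norm (cinv a) * norm (b - a) / (1 - norm (cinv a) * norm (b - a))"
    using ny ny1 small by (intro frac_le) auto
  hence "(norm y / (1 - norm y)) * norm (cinv a) \<le>
      (norm (cinv a) * norm (b - a) / (1 - norm (cinv a) * norm (b - a))) * norm (cinv a)"
    by (rule mult_right_mono) simp
  finally show ?thesis using ib by (simp add: mult.commute)
qed

lemma spec_iff: "z \<in> cspectrum x \<longleftrightarrow> \<not> cinvertible (x - cscale z 1)"
  by (simp add: cspectrum_def)

lemma spec_le_norm:
  fixes x :: "'a::cstar_algebra"
  assumes "z \<in> cspectrum x" shows "norm z \<le> norm x"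
proof (rule ccontr)
  assume "\<not> norm z \<le> norm x"
  hence zx: "norm x < norm z" and z0: "z \<noteq> 0" by auto
  have "norm (cscale (inverse z) x) = norm x / norm z" by (simp add: norm_cscale norm_inverse divide_inverse)
  hence n: "norm (cscale (inverse z) x) < 1" using zx z0 by simp
  have "cinvertible (cscale (-z) (1 - cscale (inverse z) x))"
    using neumann[OF n] z0 by (simp add: cinvertible_cscale)
  moreover have "cscale (-z) (1 - cscale (inverse z) x) = x - cscale z 1"
    using z0 by (simp add: cscale_diff_right cscale_cscale cscale_minus_left cscale_one)
  ultimately show False using assms by (simp add: spec_iff)
qed

lemma spec_shift: "z \<in> cspectrum (x + cscale c 1) \<longleftrightarrow> z - c \<in> cspectrum (x::'a::cstar_algebra)"
  by (simp add: spec_iff cscale_diff_left algebra_simps)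

lemma spec_scale: "c \<noteq> 0 \<Longrightarrow> z \<in> cspectrum (cscale c x) \<longleftrightarrow> z / c \<in> cspectrum (x::'a::cstar_algebra)"
proof -
  assume c: "c \<noteq> 0"
  have "cscale c x - cscale z 1 = cscale c (x - cscale (z / c) 1)"
    using c by (simp add: cscale_diff_right cscale_cscale)
  thus ?thesis using c by (simp add: spec_iff cinvertible_cscale_iff)
qed

lemma spec_const: "z \<in> cspectrum (cscale c (1::'a::cstar_algebra)) \<Longrightarrow> z = c"
proof (rule ccontr)
  assume z: "z \<in> cspectrum (cscale c (1::'a))" "z \<noteq> c"
  have "cscale c (1::'a) - cscale z 1 = cscale (c - z) 1" by (simp add: cscale_diff_left)
  thus False using z cinvertible_cscale[of "c - z" "1::'a"] by (simp add: spec_iff)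
qed

lemma sa_prod: "(h - cscale c 1) * (h + cscale c 1) = h * h - cscale (c * c) (1::'a::cstar_algebra)"
  by (simp add: algebra_simps cscale_one_mult mult_cscale_one cscale_cscale cscale_diff_right cscale_one)

lemma spec_real:
  fixes h :: "'a::cstar_algebra"
  assumes h: "adj h = h" and z: "z \<in> cspectrum h"
  shows "Im z = 0"
proof (rule ccontr)
  assume nz: "Im z \<noteq> 0"
  have key: "(Re z)^2 + (Im z + s)^2 \<le> (norm h)^2 + s^2" for s :: real
  proof -
    let ?c = "\<i> * complex_of_real s"
    have "z + ?c \<in> cspectrum (h + cscale ?c 1)" using z by (simp add: spec_shift)
    hence "norm (z + ?c) \<le> norm (h + cscale ?c 1)" by (rule spec_le_norm)
    hence "(norm (z + ?c))^2 \<le> (norm (h + cscale ?c 1))^2" by (simp add: power_mono)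
    also have "(norm (h + cscale ?c 1))^2 = norm (adj (h + cscale ?c 1) * (h + cscale ?c 1))"
      by (simp add: cstar_identity)
    also have "adj (h + cscale ?c 1) = h - cscale ?c 1"
      using h by (simp add: adj_add adj_cscale cscale_minus_left)
    also have "(h - cscale ?c 1) * (h + cscale ?c 1) = h * h + (s^2) *\<^sub>R 1"
      by (simp add: sa_prod cscale_minus_left flip: cscale_of_real)
         (simp add: power2_eq_square algebra_simps cscale_minus_left)
    also have "norm (h * h + (s^2) *\<^sub>R (1::'a)) \<le> (norm h)^2 + s^2"
      using norm_triangle_ineq[of "h*h" "(s^2) *\<^sub>R (1::'a)"] norm_mult_ineq[of h h]
      by (simp add: power2_eq_square)
    also have "(norm (z + ?c))^2 = (Re z)^2 + (Im z + s)^2"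
      by (simp add: cmod_power2)
    finally show ?thesis by simp
  qed
  define s where "s = ((norm h)^2 + 1) / (2 * Im z)"
  have "(Re z)^2 + (Im z + s)^2 \<le> (norm h)^2 + s^2" by (rule key)
  moreover have "2 * Im z * s = (norm h)^2 + 1" unfolding s_def using nz by simp
  ultimately show False
    by (simp add: power2_eq_square algebra_simps) (smt (verit) zero_le_square)
qed

lemma nonneg_real_iff: "z \<in> complex_of_real ` {0..} \<longleftrightarrow> Im z = 0 \<and> Re z \<ge> 0"
  by (auto simp: image_iff complex_eq_iff intro!: bexI[of _ "Re z"])

lemma cpositive_iff: "cpositive a \<longleftrightarrow> adj a = a \<and> (\<forall>z\<in>cspectrum a. Im z = 0 \<and> Re z \<ge> 0)"
  by (auto simp: cpositive_def nonneg_real_iff)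

lemma cpositive_sq:
  fixes k :: "'a::cstar_algebra"
  assumes k: "adj k = k"
  shows "cpositive (k * k)"
proof -
  have sa: "adj (k * k) = k * k" using k by (simp add: adj_mult)
  have "Im \<mu> = 0 \<and> Re \<mu> \<ge> 0" if mu: "\<mu> \<in> cspectrum (k * k)" for \<mu>
  proof -
    define \<omega> where "\<omega> = csqrt \<mu>"
    have w2: "\<omega> * \<omega> = \<mu>" unfolding \<omega>_def by (metis power2_csqrt power2_eq_square)
    have e1: "k * k - cscale \<mu> 1 = (k - cscale \<omega> 1) * (k + cscale \<omega> 1)"
      by (simp add: sa_prod w2)
    have e2: "k * k - cscale \<mu> 1 = (k + cscale \<omega> 1) * (k - cscale \<omega> 1)"
      using sa_prod[of k "-\<omega>"] w2 by (simp add: cscale_minus_left)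
    have "\<not> cinvertible (k - cscale \<omega> 1) \<or> \<not> cinvertible (k + cscale \<omega> 1)"
      using mu e1 cinvertible_mult by (auto simp: spec_iff)
    hence "\<omega> \<in> cspectrum k \<or> -\<omega> \<in> cspectrum k" by (auto simp: spec_iff cscale_minus_left)
    hence "Im \<omega> = 0" using spec_real[OF k] by fastforce
    hence "\<mu> = complex_of_real ((Re \<omega>)^2)" using w2
      by (simp add: complex_eq_iff power2_eq_square)
    thus ?thesis by simp
  qed
  thus ?thesis using sa by (simp add: cpositive_iff)
qed


lemma cinv_cont:
  fixes a :: "'a::cstar_algebra"
  assumes a: "cinvertible a" and e: "0 < e"
  shows "\<exists>d>0. \<forall>b. norm (b - a) < d \<longrightarrow> cinvertible b \<and> norm (cinv b - cinv a) < e"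
proof -
  define K where "K = norm (cinv a)"
  have K0: "0 \<le> K" unfolding K_def by simp
  define d where "d = min (1 / (2 * (K + 1))) (e / (2 * (K + 1)^2))"
  have d0: "0 < d" unfolding d_def using K0 e by simp
  have "cinvertible b \<and> norm (cinv b - cinv a) < e" if b: "norm (b - a) < d" for b
  proof -
    define q where "q = K * norm (b - a)"
    have q0: "0 \<le> q" unfolding q_def using K0 by simp
    have "q \<le> K * (1 / (2 * (K + 1)))" unfolding q_def
      using b K0 by (intro mult_left_mono) (auto simp: d_def)
    also have "\<dots> < 1/2" using K0 by (simp add: field_simps)
    finally have q2: "q < 1/2" .
    have P: "cinvertible b \<and> norm (cinv b - cinv a) \<le> K * (q / (1 - q))"
      using inv_perturb[OF a, of b] q2 unfolding q_def K_def by simp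
    have h: "q * (2*q) \<le> q * 1" by (rule mult_left_mono) (use q2 q0 in auto)
    have "q / (1 - q) \<le> 2 * q" using h q2 by (simp add: field_simps)
    hence "K * (q / (1 - q)) \<le> K * (2 * q)"
      using K0 by (intro mult_left_mono) auto
    also have "\<dots> = 2 * K^2 * norm (b - a)" unfolding q_def by (simp add: power2_eq_square)
    also have "\<dots> \<le> 2 * (K+1)^2 * norm (b - a)"
      using K0 by (intro mult_right_mono) (auto simp: power_mono)
    also have "\<dots> < 2 * (K+1)^2 * (e / (2 * (K + 1)^2))"
      using b K0 by (intro mult_strict_left_mono) (auto simp: d_def)
    also have "\<dots> = e" using K0 by (simp add: field_simps)
    finally show ?thesis using P by simp
  qed
  thus ?thesis using d0 by blast
qed

lemma half_two[simp]: "(1/2) *\<^sub>R (2::'a::real_normed_algebra_1) = 1"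
proof -
  have "(1/2) *\<^sub>R (2::'a) = (1/2) *\<^sub>R (2 *\<^sub>R 1)" by (simp add: scaleR_2)
  also have "\<dots> = ((1/2) * 2) *\<^sub>R 1" by (simp only: scaleR_scaleR)
  finally show ?thesis by simp
qed

lemma sum_list_norm_le:
  fixes g :: "'b \<Rightarrow> 'a::real_normed_vector"
  assumes "\<And>w. w \<in> set Ws \<Longrightarrow> norm (g w) \<le> e"
  shows "norm (sum_list (map g Ws)) \<le> real (length Ws) * e"
  using assms
proof (induction Ws)
  case (Cons w Ws)
  have "norm (sum_list (map g (w # Ws))) \<le> norm (g w) + norm (sum_list (map g Ws))"
    by (simp add: norm_triangle_ineq)
  also have "\<dots> \<le> e + real (length Ws) * e" using Cons by (intro add_mono) auto
  finally show ?case by (simp add: algebra_simps)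
qed simp

lemma cscale_power: "cscale c (x::'a::cstar_algebra) ^ n = cscale (c ^ n) (x ^ n)"
  by (induction n) (simp_all add: cscale_mult_left cscale_mult_right cscale_cscale cscale_one flip: cscale_of_real, simp add: mult.commute)

context
  fixes x :: "'a::cstar_algebra" and R :: real
  assumes H: "\<And>z. cmod z \<le> R \<Longrightarrow> cinvertible (1 - cscale z x)"
begin

lemma rk_cont: "continuous_on (cball 0 R) (\<lambda>z. cinv (1 - cscale z x))"
  unfolding continuous_on_iff
proof (intro ballI allI impI)
  fix z0 :: complex and e :: real
  assume z0: "z0 \<in> cball 0 R" and e: "0 < e"
  have i0: "cinvertible (1 - cscale z0 x)" using z0 H by simp
  obtain d where d: "d > 0" "\<And>b. norm (b - (1 - cscale z0 x)) < d \<Longrightarrow> norm (cinv b - cinv (1 - cscale z0 x)) < e"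
    using cinv_cont[OF i0 e] by blast
  show "\<exists>d>0. \<forall>z\<in>cball 0 R. dist z z0 < d \<longrightarrow> dist (cinv (1 - cscale z x)) (cinv (1 - cscale z0 x)) < e"
  proof (intro exI[of _ "d / (norm x + 1)"] conjI ballI impI)
    show "0 < d / (norm x + 1)" by (metis d(1) divide_pos_pos norm_ge_zero add_nonneg_pos zero_less_one)
    fix z assume "z \<in> cball 0 R" "dist z z0 < d / (norm x + 1)"
    have pos: "0 < norm x + 1" by (metis norm_ge_zero add_nonneg_pos zero_less_one)
    hence dz: "cmod (z - z0) * (norm x + 1) < d" by (metis \<open>dist z z0 < d / (norm x + 1)\<close> pos_less_divide_eq dist_norm)
    have "norm ((1 - cscale z x) - (1 - cscale z0 x)) = cmod (z - z0) * norm x"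
      by (simp add: cscale_diff_left[symmetric] norm_cscale norm_minus_commute)
    also have "\<dots> \<le> cmod (z - z0) * (norm x + 1)" by (intro mult_left_mono) auto
    finally show "dist (cinv (1 - cscale z x)) (cinv (1 - cscale z0 x)) < e"
      using d(2) dz by (simp add: dist_norm)
  qed
qed

lemma rk_avg:
  "\<exists>Ws. length Ws = 2^m \<and> (\<forall>w\<in>set Ws. cmod w = 1) \<and>
     (\<forall>z. cmod z \<le> R \<longrightarrow> cinvertible (1 - cscale (z^(2^m)) (x^(2^m))) \<and>
        cinv (1 - cscale (z^(2^m)) (x^(2^m))) =
          (1 / 2^m) *\<^sub>R sum_list (map (\<lambda>w. cinv (1 - cscale (w * z) x)) Ws))"
proof (induction m)
  case 0
  show ?case by (rule exI[of _ "[1]"]) (simp add: H)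
next
  case (Suc m)
  then obtain Ws where W: "length Ws = 2^m" "\<forall>w\<in>set Ws. cmod w = 1"
    "\<And>z. cmod z \<le> R \<Longrightarrow> cinvertible (1 - cscale (z^(2^m)) (x^(2^m))) \<and>
        cinv (1 - cscale (z^(2^m)) (x^(2^m))) =
          (1 / 2^m) *\<^sub>R sum_list (map (\<lambda>w. cinv (1 - cscale (w * z) x)) Ws)" by blast
  define N :: nat where "N = 2^m"
  define \<zeta> where "\<zeta> = cis (pi / real N)"
  have N0: "N > 0" unfolding N_def by simp
  have zN: "\<zeta> ^ N = -1" unfolding \<zeta>_def Complex.DeMoivre using N0 by simp
  have nz: "cmod \<zeta> = 1" unfolding \<zeta>_def by simp
  define Ws' where "Ws' = Ws @ map (\<lambda>w. w * \<zeta>) Ws"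
  show ?case
  proof (intro exI[of _ Ws'] conjI allI impI)
    show "length Ws' = 2 ^ Suc m" unfolding Ws'_def using W by simp
    show "\<forall>w\<in>set Ws'. cmod w = 1" unfolding Ws'_def using W nz by (auto simp: norm_mult)
    fix z :: complex assume z: "cmod z \<le> R"
    define w where "w = cscale (z^N) (x^N)"
    have zz: "cmod (\<zeta> * z) \<le> R" using z nz by (simp add: norm_mult)
    have A: "cinvertible (1 - w)" "cinv (1 - w) = (1 / N) *\<^sub>R sum_list (map (\<lambda>v. cinv (1 - cscale (v * z) x)) Ws)"
      using W(3)[OF z] unfolding w_def N_def by auto
    have e2: "1 - cscale ((\<zeta> * z)^N) (x^N) = 1 + w"
      unfolding w_def by (simp add: power_mult_distrib zN cscale_minus_left)
    have B: "cinvertible (1 + w)" "cinv (1 + w) = (1 / N) *\<^sub>R sum_list (map (\<lambda>v. cinv (1 - cscale (v * (\<zeta> * z)) x)) Ws)"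
      using W(3)[OF zz] e2 unfolding N_def by auto
    have pw: "2 ^ Suc m = N * 2" unfolding N_def by simp
    have e3: "1 - cscale (z^(2 ^ Suc m)) (x^(2 ^ Suc m)) = (1 - w) * (1 + w)"
    proof -
      have ww: "w * w = cscale (z^N*z^N) (x^N * x^N)" unfolding w_def
        by (simp add: cscale_mult_left cscale_mult_right cscale_cscale mult.commute)
      have "(1-w)*(1+w) = 1 - w*w" by (simp add: algebra_simps)
      thus ?thesis unfolding pw power_mult ww by (simp add: power2_eq_square)
    qed
    have comm: "(1 - w) * (1 + w) = (1 + w) * (1 - w)" by (simp add: algebra_simps)
    let ?A = "cinv (1 - w)" and ?B = "cinv (1 + w)"
    have l1: "(1 - w) * (1 + w) * ((1/2) *\<^sub>R (?A + ?B)) = 1"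
    proof -
      have "(1 - w) * (1 + w) * ?A = 1 + w" using comm cinv_right[OF A(1)] by (metis mult.assoc mult_1_right)
      moreover have "(1 - w) * (1 + w) * ?B = 1 - w" using cinv_right[OF B(1)] by (metis mult.assoc mult_1_right)
      ultimately show ?thesis by (simp add: distrib_left scaleR_add_right[symmetric])
    qed
    have l2: "((1/2) *\<^sub>R (?A + ?B)) * ((1 - w) * (1 + w)) = 1"
    proof -
      have "?A * ((1 - w) * (1 + w)) = 1 + w" using cinv_left[OF A(1)] by (metis mult.assoc mult_1_left)
      moreover have "?B * ((1 - w) * (1 + w)) = 1 - w" using comm cinv_left[OF B(1)] by (metis mult.assoc mult_1_left)
      ultimately show ?thesis by (simp add: distrib_right scaleR_add_right[symmetric])
    qed
    show "cinvertible (1 - cscale (z ^ 2 ^ Suc m) (x ^ 2 ^ Suc m))"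
      unfolding e3 using l1 l2 by (rule cinvertibleI)
    have "cinv (1 - cscale (z ^ 2 ^ Suc m) (x ^ 2 ^ Suc m)) = (1/2) *\<^sub>R (?A + ?B)"
      unfolding e3 using l1 l2 by (rule cinv_unique)
    also have "\<dots> = (1 / 2 ^ Suc m) *\<^sub>R sum_list (map (\<lambda>v. cinv (1 - cscale (v * z) x)) Ws')"
      unfolding A(2) B(2) Ws'_def pw by (simp add: map_map o_def mult.assoc scaleR_add_right N_def)
    finally show "cinv (1 - cscale (z ^ 2 ^ Suc m) (x ^ 2 ^ Suc m)) =
        (1 / 2 ^ Suc m) *\<^sub>R sum_list (map (\<lambda>v. cinv (1 - cscale (v * z) x)) Ws')" .
  qed
qed


definition "rkB t \<longleftrightarrow> (\<exists>C. \<forall>m::nat. norm ((t^(2^m)) *\<^sub>R x^(2^m)) \<le> C)"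

lemma rkB_mono: assumes "rkB t" "0 \<le> s" "s \<le> t" shows "rkB s"
proof -
  obtain C where C: "\<And>m. norm ((t^(2^m)) *\<^sub>R x^(2^m)) \<le> C" using assms(1) unfolding rkB_def by blast
  have "norm ((s^(2^m)) *\<^sub>R x^(2^m)) \<le> C" for m
  proof -
    have "norm ((s^(2^m)) *\<^sub>R x^(2^m)) = s^(2^m) * norm (x^(2^m))" using assms by simp
    also have "\<dots> \<le> t^(2^m) * norm (x^(2^m))" using assms by (intro mult_right_mono power_mono) auto
    also have "\<dots> = norm ((t^(2^m)) *\<^sub>R x^(2^m))" using assms by simp
    finally show ?thesis using C[of m] by simp
  qed
  thus ?thesis unfolding rkB_def by blast
qed

lemma rkB_small: assumes "0 \<le> t" "t * norm x \<le> 1" shows "rkB t"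
proof -
  have "norm ((t^(2^m)) *\<^sub>R x^(2^m)) \<le> 1" for m :: nat
  proof -
    have "norm ((t^(2^m)) *\<^sub>R x^(2^m)) = t^(2^m) * norm (x^(2^m))" using assms by simp
    also have "\<dots> \<le> t^(2^m) * norm x ^ (2^m)" using assms by (intro mult_left_mono norm_power_ineq) auto
    also have "\<dots> = (t * norm x)^(2^m)" by (simp add: power_mult_distrib)
    also have "\<dots> \<le> 1" using assms by (intro power_le_one) auto
    finally show ?thesis .
  qed
  thus ?thesis unfolding rkB_def by blast
qed

lemma rk_real_avg:
  assumes "0 \<le> t" "t \<le> R"
  obtains Ws where "length Ws = 2^m" "\<forall>w\<in>set Ws. cmod w = 1"
    "\<And>s. 0 \<le> s \<Longrightarrow> s \<le> R \<Longrightarrow> cinvertible (1 - (s^(2^m)) *\<^sub>R x^(2^m)) \<and>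
        cinv (1 - (s^(2^m)) *\<^sub>R x^(2^m)) =
          (1 / 2^m) *\<^sub>R sum_list (map (\<lambda>w. cinv (1 - cscale (w * complex_of_real s) x)) Ws)"
proof -
  obtain Ws where W: "length Ws = 2^m" "\<forall>w\<in>set Ws. cmod w = 1"
    "\<forall>z. cmod z \<le> R \<longrightarrow> cinvertible (1 - cscale (z^(2^m)) (x^(2^m))) \<and>
        cinv (1 - cscale (z^(2^m)) (x^(2^m))) =
          (1 / 2^m) *\<^sub>R sum_list (map (\<lambda>w. cinv (1 - cscale (w * z) x)) Ws)"
    using rk_avg[of m] by blast
  show ?thesis
  proof (rule that[OF W(1,2)])
    fix s :: real assume "0 \<le> s" "s \<le> R"
    hence h: "cmod (complex_of_real s) \<le> R" by simp
    have eq: "cscale ((complex_of_real s)^(2^m)) (x^(2^m)) = (s^(2^m)) *\<^sub>R x^(2^m)"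
      by (metis cscale_of_real of_real_power)
    show "cinvertible (1 - (s^(2^m)) *\<^sub>R x^(2^m)) \<and>
        cinv (1 - (s^(2^m)) *\<^sub>R x^(2^m)) =
          (1 / 2^m) *\<^sub>R sum_list (map (\<lambda>w. cinv (1 - cscale (w * complex_of_real s) x)) Ws)"
      using W(3)[rule_format, OF h] unfolding eq .
  qed
qed

lemma rk_step:
  assumes d: "0 < d" "\<forall>z\<in>cball 0 R. \<forall>z'\<in>cball 0 R. dist z' z < d \<longrightarrow>
      dist (cinv (1 - cscale z' x)) (cinv (1 - cscale z x)) < 1/4"
    and B: "rkB t" and t: "0 < t" "t \<le> t''" "t'' \<le> R" "t'' \<le> t + d/2"
  shows "rkB t''"
proof -
  define t' where "t' = max 0 (t - d/4)"
  have t'0: "0 \<le> t'" and t't: "t' < t" and dd: "t'' - t' < d"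
    unfolding t'_def using t d by auto
  obtain C where C: "\<And>m. norm ((t^(2^m)) *\<^sub>R x^(2^m)) \<le> C" using B unfolding rkB_def by blast
  have C0: "0 \<le> C" using C[of 0] norm_ge_zero order_trans by blast
  define w' where "w' m = (t'^(2^m)) *\<^sub>R x^(2^m)" for m :: nat
  define w'' where "w'' m = (t''^(2^m)) *\<^sub>R x^(2^m)" for m :: nat
  have q0: "0 \<le> t'/t" and q1: "t'/t < 1" using t'0 t't t by auto
  have conv: "w' \<longlonglongrightarrow> 0"
  proof (rule Lim_null_comparison[where g="\<lambda>m. C * (t'/t)^m"])
    show "\<forall>\<^sub>F m in sequentially. norm (w' m) \<le> C * (t'/t)^m"
    proof (intro always_eventually allI)
      fix m :: nat
      have "norm (w' m) = (t'/t)^(2^m) * norm ((t^(2^m)) *\<^sub>R x^(2^m))"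
        unfolding w'_def using t t'0 by (simp add: power_divide)
      also have "\<dots> \<le> (t'/t)^m * C"
      proof (rule mult_mono)
        show "(t'/t)^(2^m) \<le> (t'/t)^m" using q0 q1 by (intro power_decreasing) (auto intro: less_imp_le less_exp)
      qed (use C q0 in auto)
      finally show "norm (w' m) \<le> C * (t'/t)^m" by (simp add: mult.commute)
    qed
    show "(\<lambda>m. C * (t'/t)^m) \<longlonglongrightarrow> 0" using q0 q1 by (intro tendsto_mult_right_zero LIMSEQ_power_zero) auto
  qed
  have conv2: "(\<lambda>m. cinv (1 - w' m)) \<longlonglongrightarrow> 1"
  proof (rule LIM_zero_cancel, rule Lim_null_comparison[where g="\<lambda>m. 2 * norm (w' m)"])
    have "\<forall>\<^sub>F m in sequentially. norm (w' m) < 1/2"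
      using tendsto_norm_zero[OF conv] by (rule order_tendstoD) simp
    thus "\<forall>\<^sub>F m in sequentially. norm (cinv (1 - w' m) - 1) \<le> 2 * norm (w' m)"
    proof eventually_elim
      case (elim m)
      hence "norm (cinv (1 - w' m) - 1) \<le> norm (w' m) / (1 - norm (w' m))" using neumann[of "w' m"] by simp
      also have "\<dots> \<le> 2 * norm (w' m)"
      proof -
        have h: "norm (w' m) * (2*norm (w' m)) \<le> norm (w' m) * 1" by (rule mult_left_mono) (use elim in auto)
        thus ?thesis using elim by (simp add: field_simps)
      qed
      finally show ?case .
    qed
    show "(\<lambda>m. 2 * norm (w' m)) \<longlonglongrightarrow> 0" using tendsto_norm_zero[OF conv] by (rule tendsto_mult_right_zero)
  qed
  obtain M where M: "\<And>m. m \<ge> M \<Longrightarrow> norm (cinv (1 - w' m) - 1) < 1/4"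
    using LIMSEQ_D[OF conv2, of "1/4"] by auto
  have big: "norm (w'' m) \<le> 1" if m: "m \<ge> M" for m
  proof -
    obtain Ws where W: "length Ws = 2^m" "\<forall>w\<in>set Ws. cmod w = 1"
      "\<And>s. 0 \<le> s \<Longrightarrow> s \<le> R \<Longrightarrow> cinvertible (1 - (s^(2^m)) *\<^sub>R x^(2^m)) \<and>
        cinv (1 - (s^(2^m)) *\<^sub>R x^(2^m)) =
          (1 / 2^m) *\<^sub>R sum_list (map (\<lambda>w. cinv (1 - cscale (w * complex_of_real s) x)) Ws)"
      using rk_real_avg[of t m] t by (smt (verit))
    have t'R: "t' \<le> R" using t't t by simp
    have t''0: "0 \<le> t''" using t by simp
    define Sp where "Sp = cinv (1 - w'' m)"
    define S' where "S' = cinv (1 - w' m)"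
    have Sp_eq: "Sp = (1 / 2^m) *\<^sub>R sum_list (map (\<lambda>w. cinv (1 - cscale (w * complex_of_real t'') x)) Ws)"
      using W(3)[OF t''0 t(3)] unfolding Sp_def w''_def by simp
    have S'_eq: "S' = (1 / 2^m) *\<^sub>R sum_list (map (\<lambda>w. cinv (1 - cscale (w * complex_of_real t') x)) Ws)"
      using W(3)[OF t'0 t'R] unfolding S'_def w'_def by simp
    have "Sp - S' = (1 / 2^m) *\<^sub>R sum_list (map (\<lambda>w. cinv (1 - cscale (w * complex_of_real t'') x)
        - cinv (1 - cscale (w * complex_of_real t') x)) Ws)"
      unfolding Sp_eq S'_eq by (simp add: sum_list_subtractf scaleR_diff_right)
    also have "norm \<dots> \<le> (1 / 2^m) * (real (length Ws) * (1/4))"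
    proof -
      have "norm (sum_list (map (\<lambda>w. cinv (1 - cscale (w * complex_of_real t'') x)
        - cinv (1 - cscale (w * complex_of_real t') x)) Ws)) \<le> real (length Ws) * (1/4)"
      proof (rule sum_list_norm_le)
        fix w assume w: "w \<in> set Ws"
        hence w1: "cmod w = 1" using W(2) by auto
        have a: "w * complex_of_real t'' \<in> cball 0 R" using w1 t''0 t(3) by (simp add: norm_mult)
        have b: "w * complex_of_real t' \<in> cball 0 R" using w1 t'0 t'R by (simp add: norm_mult)
        have "dist (w * complex_of_real t'') (w * complex_of_real t') = t'' - t'"
          using w1 t t't by (simp add: dist_norm right_diff_distrib[symmetric] norm_mult flip: of_real_diff)
        hence "dist (w * complex_of_real t'') (w * complex_of_real t') < d" using dd by simp
        hence "dist (cinv (1 - cscale (w * complex_of_real t'') x)) (cinv (1 - cscale (w * complex_of_real t') x)) < 1/4"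
          using d(2) a b by blast
        thus "norm (cinv (1 - cscale (w * complex_of_real t'') x) - cinv (1 - cscale (w * complex_of_real t') x)) \<le> 1/4"
          by (simp add: dist_norm)
      qed
      from mult_left_mono[OF this, of "1/2^m"] show ?thesis by simp
    qed
    also have "\<dots> = 1/4" using W(1) by simp
    finally have d1: "norm (Sp - S') \<le> 1/4" .
    have "norm (Sp - 1) \<le> norm (Sp - S') + norm (S' - 1)" by (metis diff_add_cancel norm_triangle_ineq add_diff_eq)
    also have "\<dots> < 1/2" using d1 M[OF m] unfolding S'_def by simp
    finally have n2: "norm (Sp - 1) < 1/2" .
    have inv: "cinvertible (1 - w'' m)" using W(3)[OF t''0 t(3)] unfolding w''_def by simp
    have cS: "cinv Sp = 1 - w'' m" unfolding Sp_def by (rule cinv_cinv[OF inv])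
    have iS: "cinvertible Sp" unfolding Sp_def by (rule cinvertible_cinv[OF inv])
    have n3: "norm (1 - Sp) < 1" using n2 by (simp add: norm_minus_commute)
    have "norm (cinv Sp) \<le> 1 / (1 - norm (1 - Sp))" using neumann_norm[OF n3] by simp
    also have "\<dots> \<le> 2" using n2 by (simp add: norm_minus_commute field_simps)
    finally have nc: "norm (cinv Sp) \<le> 2" .
    have "w'' m = cinv Sp * (Sp - 1)" using cS cinv_left[OF iS] by (simp add: algebra_simps)
    hence "norm (w'' m) \<le> norm (cinv Sp) * norm (Sp - 1)" by (simp add: norm_mult_ineq)
    also have "\<dots> \<le> 2 * (1/2)" using nc n2 by (intro mult_mono) auto
    finally show ?thesis by simp
  qed
  have "norm (w'' m) \<le> 1 + (\<Sum>k<M. norm (w'' k))" for m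
  proof (cases "m \<ge> M")
    case True thus ?thesis using big[OF True] by (smt (verit) sum_nonneg norm_ge_zero)
  next
    case False
    hence "norm (w'' m) \<le> (\<Sum>k<M. norm (w'' k))" by (intro member_le_sum) auto
    thus ?thesis by simp
  qed
  thus ?thesis unfolding rkB_def w''_def by blast
qed

lemma rickart:
  assumes R1: "1 < R"
  shows "\<exists>C. \<forall>m. norm (x^(2^m)) \<le> C"
proof -
  have "uniformly_continuous_on (cball 0 R) (\<lambda>z. cinv (1 - cscale z x))"
    by (rule compact_uniformly_continuous[OF rk_cont]) simp
  then obtain d where d: "0 < d" "\<forall>z\<in>cball 0 R. \<forall>z'\<in>cball 0 R. dist z' z < d \<longrightarrow>
      dist (cinv (1 - cscale z' x)) (cinv (1 - cscale z x)) < 1/4"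
    unfolding uniformly_continuous_on_def by (meson zero_less_divide_1_iff zero_less_numeral)
  define t0 where "t0 = min R (1 / (norm x + 1))"
  have npos: "0 < norm x + 1" by (metis norm_ge_zero add_nonneg_pos zero_less_one)
  have t00: "0 < t0" unfolding t0_def using R1 npos by simp
  have t0R: "t0 \<le> R" unfolding t0_def by simp
  have t0x: "t0 * norm x \<le> 1"
  proof -
    have "t0 * norm x \<le> (1 / (norm x + 1)) * norm x" unfolding t0_def by (intro mult_right_mono) auto
    also have "\<dots> \<le> 1" using npos by (simp add: field_simps)
    finally show ?thesis .
  qed
  have claim: "\<forall>t. 0 < t \<longrightarrow> t \<le> R \<longrightarrow> t \<le> t0 + real k * (d/2) \<longrightarrow> rkB t" for k
  proof (induction k)
    case 0
    show ?case
    proof (intro allI impI)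
      fix t assume t: "0 < t" "t \<le> R" "t \<le> t0 + real 0 * (d/2)"
      show "rkB t" by (rule rkB_mono[OF rkB_small[OF less_imp_le[OF t00] t0x]]) (use t in auto)
    qed
  next
    case (Suc k)
    show ?case
    proof (intro allI impI)
      fix t assume t: "0 < t" "t \<le> R" "t \<le> t0 + real (Suc k) * (d/2)"
      show "rkB t"
      proof (cases "t \<le> t0 + real k * (d/2)")
        case True thus ?thesis using Suc t by blast
      next
        case False
        define t1 where "t1 = t0 + real k * (d/2)"
        have t10: "0 < t1" unfolding t1_def using t00 d by (simp add: add_pos_nonneg)
        have B1: "rkB t1" using Suc t10 False t unfolding t1_def by auto
        have e: "real (Suc k) * (d/2) = real k * (d/2) + d/2" by (simp add: distrib_right)
        have "t \<le> t1 + d/2" using t(3) e unfolding t1_def by linarith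
        moreover have "t1 \<le> t" using False unfolding t1_def by simp
        ultimately show ?thesis
          by (intro rk_step[OF d B1 t10]) (use t in auto)
      qed
    qed
  qed
  obtain k :: nat where k: "1 / (d/2) < real k" using reals_Archimedean2 by blast
  have "1 \<le> t0 + real k * (d/2)" using k d t00 by (simp add: field_simps)
  hence "rkB 1" using claim[of k] R1 by auto
  thus ?thesis unfolding rkB_def by simp
qed

end

lemma sa_power_norm:
  fixes x :: "'a::cstar_algebra"
  assumes "adj x = x"
  shows "norm (x^(2^m)) = norm x ^ (2^m)"
proof (induction m)
  case (Suc m)
  have sa: "adj (x^(2^m)) = x^(2^m)" using assms by (simp add: adj_power)
  have "x^(2^Suc m) = x^(2^m) * x^(2^m)" by (simp add: power_add[symmetric] mult_2)
  hence "norm (x^(2^Suc m)) = (norm (x^(2^m)))^2" using adj_selfadj_sq[OF sa] by simp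
  also have "\<dots> = norm x ^ (2^Suc m)" using Suc by (simp add: power_mult[symmetric] mult.commute)
  finally show ?case .
qed simp

lemma norm_le_specrad:
  fixes k :: "'a::cstar_algebra"
  assumes k: "adj k = k" and r: "0 \<le> r" and sp: "\<And>z. z \<in> cspectrum k \<Longrightarrow> cmod z \<le> r"
  shows "norm k \<le> r"
proof (rule ccontr)
  assume "\<not> norm k \<le> r"
  define D where "D = norm k - r"
  have D: "0 < D" using \<open>\<not> norm k \<le> r\<close> unfolding D_def by simp
  define \<rho>1 where "\<rho>1 = r + D/3"
  define \<rho> where "\<rho> = r + 2*D/3"
  have r1: "0 < \<rho>1" "r < \<rho>1" "\<rho>1 < \<rho>" "\<rho> < norm k" unfolding \<rho>1_def \<rho>_def using r D unfolding D_def by (auto simp: field_simps)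
  define x where "x = (1/\<rho>) *\<^sub>R k"
  define R where "R = \<rho> / \<rho>1"
  have R1: "1 < R" unfolding R_def using r1 by simp
  have H: "cinvertible (1 - cscale z x)" if z: "cmod z \<le> R" for z
  proof (cases "z = 0")
    case True thus ?thesis by simp
  next
    case False
    have "cmod (of_real \<rho> / z) = \<rho> / cmod z" using r1 by (simp add: norm_divide)
    also have "\<rho> / cmod z \<ge> \<rho> / R" using z False r1 R1 by (intro divide_left_mono) auto
    hence "\<rho> / cmod z > r" using r1 unfolding R_def by simp
    finally have "of_real \<rho> / z \<notin> cspectrum k" using sp by force
    hence inv: "cinvertible (k - cscale (of_real \<rho> / z) 1)" by (simp add: spec_iff)
    have "cscale (-(z / of_real \<rho>)) (k - cscale (of_real \<rho> / z) 1) = 1 - cscale z x"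
      unfolding x_def using False r1
      by (simp add: cscale_diff_right cscale_cscale cscale_scaleR cscale_minus_left cscale_one field_simps)
    moreover have "cinvertible (cscale (-(z / of_real \<rho>)) (k - cscale (of_real \<rho> / z) 1))"
      using inv False r1 by (intro cinvertible_cscale) auto
    ultimately show ?thesis by simp
  qed
  obtain C where C: "\<And>m. norm (x^(2^m)) \<le> C" using rickart[OF H R1] by blast
  have sa: "adj x = x" unfolding x_def using k by (simp add: adj_scaleR)
  define q where "q = norm k / \<rho>"
  have q1: "1 < q" unfolding q_def using r1 by simp
  have nx: "norm x = q" unfolding x_def q_def using r1 by simp
  obtain m :: nat where m: "C / (q - 1) < real m" using reals_Archimedean2 by blast
  have "1 + real m * (q - 1) \<le> q ^ m" using Bernoulli_inequality[of "q - 1" m] q1 by simp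
  also have "\<dots> \<le> q ^ (2^m)" using q1 by (intro power_increasing) (auto intro: less_imp_le less_exp)
  also have "\<dots> = norm (x^(2^m))" using sa_power_norm[OF sa] nx by simp
  also have "\<dots> \<le> C" by (rule C)
  finally have "real m * (q - 1) < C" by simp
  moreover have "C < real m * (q - 1)" using m q1 by (simp add: field_simps)
  ultimately show False by simp
qed


lemma spec_affine: "z \<in> cspectrum (t *\<^sub>R 1 - (x::'a::cstar_algebra)) \<longleftrightarrow> complex_of_real t - z \<in> cspectrum x"
proof -
  have eq: "t *\<^sub>R 1 - x - cscale z 1 = - (x - cscale (complex_of_real t - z) 1)"
    by (simp add: cscale_diff_left cscale_of_real algebra_simps)
  show ?thesis by (simp only: spec_iff eq cinvertible_minus)
qed

lemma cpositive_norm: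
  fixes b :: "'a::cstar_algebra"
  assumes b: "cpositive b" and t: "norm b \<le> t"
  shows "norm (t *\<^sub>R 1 - b) \<le> t"
proof (rule norm_le_specrad)
  show "adj (t *\<^sub>R 1 - b) = t *\<^sub>R 1 - b" using b by (simp add: cpositive_def adj_diff adj_scaleR)
  show "0 \<le> t" using t norm_ge_zero order_trans by blast
  fix z assume "z \<in> cspectrum (t *\<^sub>R 1 - b)"
  hence l: "complex_of_real t - z \<in> cspectrum b" by (simp add: spec_affine)
  hence "Im (complex_of_real t - z) = 0 \<and> Re (complex_of_real t - z) \<ge> 0" using b unfolding cpositive_iff by blast
  moreover have "cmod (complex_of_real t - z) \<le> t" using spec_le_norm[OF l] t by simp
  ultimately have "Im z = 0" "Re z \<le> t" "Re z \<ge> 0" using abs_Re_le_cmod[of "complex_of_real t - z"] by auto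
  thus "cmod z \<le> t" by (simp add: cmod_eq_Re)
qed

lemma positive_of_norm:
  fixes c :: "'a::cstar_algebra"
  assumes c: "adj c = c" and t: "norm (t *\<^sub>R 1 - c) \<le> t"
  shows "cpositive c"
  unfolding cpositive_iff
proof (rule conjI[OF c], rule ballI)
  fix z assume z: "z \<in> cspectrum c"
  have im: "Im z = 0" by (rule spec_real[OF c z])
  have "complex_of_real t - (complex_of_real t - z) \<in> cspectrum c" using z by simp
  hence "complex_of_real t - z \<in> cspectrum (t *\<^sub>R 1 - c)" by (simp only: spec_affine)
  hence "cmod (complex_of_real t - z) \<le> t" using spec_le_norm t by fastforce
  hence "\<bar>t - Re z\<bar> \<le> t" using im by (simp add: cmod_eq_Re)
  thus "Im z = 0 \<and> 0 \<le> Re z" using im by simp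
qed

lemma cpositive_add:
  fixes a b :: "'a::cstar_algebra"
  assumes a: "cpositive a" and b: "cpositive b"
  shows "cpositive (a + b)"
proof (rule positive_of_norm)
  show "adj (a + b) = a + b" using a b by (simp add: cpositive_def adj_add)
  have "(norm a + norm b) *\<^sub>R 1 - (a + b) = (norm a *\<^sub>R 1 - a) + (norm b *\<^sub>R 1 - b)"
    by (simp add: algebra_simps scaleR_add_left)
  also have "norm \<dots> \<le> norm a + norm b"
    using cpositive_norm[OF a order_refl] cpositive_norm[OF b order_refl] norm_triangle_ineq
    by (smt (verit))
  finally show "norm ((norm a + norm b) *\<^sub>R 1 - (a + b)) \<le> norm a + norm b" .
qed

lemma cpositive_zero: "cpositive (0::'a::cstar_algebra)"
  unfolding cpositive_iff using spec_const[of _ 0] by force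

lemma cpositive_one: "cpositive (1::'a::cstar_algebra)"
  unfolding cpositive_iff using spec_const[of _ 1] by (force simp: cscale_one)

lemma cpositive_scaleR:
  fixes b :: "'a::cstar_algebra"
  assumes b: "cpositive b" and r: "0 \<le> r"
  shows "cpositive (r *\<^sub>R b)"
proof (cases "r = 0")
  case True thus ?thesis by (simp add: cpositive_zero)
next
  case False
  hence r0: "complex_of_real r \<noteq> 0" by simp
  show ?thesis unfolding cpositive_iff
  proof (rule conjI, goal_cases)
    case 1 show "adj (r *\<^sub>R b) = r *\<^sub>R b" using b by (simp add: cpositive_def adj_scaleR)
  next
    case 2 show ?case proof
    fix z assume "z \<in> cspectrum (r *\<^sub>R b)"
    hence "z / complex_of_real r \<in> cspectrum b" using spec_scale[OF r0, of z b] by (simp add: cscale_of_real)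
    hence "Im (z / complex_of_real r) = 0 \<and> Re (z / complex_of_real r) \<ge> 0" using b unfolding cpositive_iff by blast
    thus "Im z = 0 \<and> 0 \<le> Re z" using r False by (simp add: Im_divide_of_real Re_divide_of_real zero_le_divide_iff)
  qed
  qed
qed

lemma cpositive_shift:
  fixes h :: "'a::cstar_algebra"
  assumes h: "adj h = h"
  shows "cpositive (norm h *\<^sub>R 1 + h)"
proof (rule positive_of_norm[where t="norm h"])
  show "adj (norm h *\<^sub>R 1 + h) = norm h *\<^sub>R 1 + h" using h by (simp add: adj_add adj_scaleR)
  show "norm (norm h *\<^sub>R 1 - (norm h *\<^sub>R 1 + h)) \<le> norm h" by simp
qed

lemma cpositive_inv:
  fixes u :: "'a::cstar_algebra"
  assumes u: "cpositive u" and i: "cinvertible u"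
  shows "cpositive (cinv u)"
  unfolding cpositive_iff
proof (rule conjI, goal_cases)
  case 1
  have su: "adj u = u" using u by (simp add: cpositive_def)
  show "adj (cinv u) = cinv u" using cinv_adj[OF i] su by simp
next
  case 2 show ?case proof
  fix \<mu> assume mu: "\<mu> \<in> cspectrum (cinv u)"
  have m0: "\<mu> \<noteq> 0" using mu cinvertible_cinv[OF i] by (auto simp: spec_iff)
  have "inverse \<mu> \<in> cspectrum u"
  proof (rule ccontr)
    assume "inverse \<mu> \<notin> cspectrum u"
    hence inv: "cinvertible (u - cscale (inverse \<mu>) 1)" by (simp add: spec_iff)
    have "cinv u - cscale \<mu> 1 = cscale (-\<mu>) (cinv u * (u - cscale (inverse \<mu>) 1))"
      using m0 by (simp add: right_diff_distrib cinv_left[OF i] cscale_diff_right mult_cscale_one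
          cscale_cscale cscale_minus_left cscale_one)
    moreover have "cinvertible (cscale (-\<mu>) (cinv u * (u - cscale (inverse \<mu>) 1)))"
      using m0 by (intro cinvertible_cscale cinvertible_mult cinvertible_cinv i inv) auto
    ultimately show False using mu by (simp add: spec_iff)
  qed
  hence "Im (inverse \<mu>) = 0 \<and> Re (inverse \<mu>) \<ge> 0" using u unfolding cpositive_iff by blast
  hence "inverse \<mu> \<in> complex_of_real ` {0..}" by (simp add: nonneg_real_iff)
  then obtain s where s: "s \<ge> 0" "inverse \<mu> = complex_of_real s" by auto
  hence "\<mu> = complex_of_real (inverse s)" by (metis inverse_inverse_eq of_real_inverse)
  thus "Im \<mu> = 0 \<and> 0 \<le> Re \<mu>" using s by simp
qed
qed


definition hg :: "nat \<Rightarrow> real" where "hg n = (1/2) gchoose n"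

lemma hg_0[simp]: "hg 0 = 1" by (simp add: hg_def)

lemma hg_Suc: "hg (Suc n) = hg n * (1/2 - real n) / (real n + 1)"
  using gbinomial_mult_1[of "1/2::real" n] unfolding hg_def by (simp add: field_simps)

lemma hg_sign: "n \<ge> 1 \<Longrightarrow> (-1)^n * hg n \<le> 0"
proof (induction n rule: dec_induct)
  case base thus ?case using hg_Suc[of 0] by simp
next
  case (step n)
  have "(-1)^Suc n * hg (Suc n) = ((-1)^n * hg n) * ((real n - 1/2) / (real n + 1))"
    by (simp add: hg_Suc field_simps)
  moreover have "(real n - 1/2) / (real n + 1) \<ge> 0" using step(1) by simp
  ultimately show ?case using step(3) by (metis mult_nonpos_nonneg)
qed

lemma hg_abs: "n \<ge> 1 \<Longrightarrow> \<bar>hg n\<bar> = - ((-1)^n * hg n)"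
proof -
  assume n: "n \<ge> 1"
  have "\<bar>hg n\<bar> = \<bar>(-1)^n * hg n\<bar>" by (simp add: abs_mult)
  thus ?thesis using hg_sign[OF n] by simp
qed

lemma hg_neg: "hg k * (-t)^k = ((-1)^k * hg k) * (t::real)^k"
  by (simp only: power_minus[of t] mult_ac)

lemma half_plus_half: "1/2 + 1/2 = (1::real)" by simp

lemma one_gchoose: "(1::real) gchoose n = (if n \<le> 1 then 1 else 0)"
proof -
  have "(1::real) gchoose n = real (1 choose n)" by (metis binomial_gbinomial of_nat_1)
  also have "real (1 choose n) = (if n \<le> 1 then 1 else 0)"
  proof (cases "n \<le> 1")
    case True
    hence "n = 0 \<or> n = 1" by auto
    thus ?thesis by auto
  next
    case False
    hence "1 choose n = 0" by (simp add: binomial_eq_0)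
    thus ?thesis using False by simp
  qed
  finally show ?thesis .
qed

lemma hg_vandermonde: "(\<Sum>k\<le>n. hg k * hg (n - k)) = (if n \<le> 1 then 1 else 0)"
proof -
  have "(\<Sum>k\<in>{0..n}. hg k * hg (n - k)) = (1/2 + 1/2::real) gchoose n"
    unfolding hg_def by (rule gbinomial_Vandermonde)
  hence "(\<Sum>k\<le>n. hg k * hg (n - k)) = (1::real) gchoose n" by (simp only: atLeast0AtMost half_plus_half)
  thus ?thesis by (simp only: one_gchoose)
qed

lemma hg_partial_bound: "(\<Sum>n<N. \<bar>hg n\<bar> * t^n) \<le> 2" if t: "0 \<le> t" "t < 1" for t :: real and N
proof (cases "N = 0")
  case True thus ?thesis by simp
next
  case N: False
  have s: "(\<lambda>n. hg n * (-t)^n) sums sqrt (1 + (-t))" using sqrt_series[of "-t"] t unfolding hg_def by simp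
  have tail: "(\<lambda>n. hg (n + N) * (-t)^(n + N)) sums (sqrt (1 - t) - (\<Sum>n<N. hg n * (-t)^n))"
    using sums_split_initial_segment[OF s, of N] by simp
  have "(\<Sum>n. hg (n + N) * (-t)^(n + N)) \<le> (\<Sum>n. 0::real)"
  proof (rule suminf_le)
    show "summable (\<lambda>n. hg (n + N) * (- t) ^ (n + N))" using tail by (rule sums_summable)
    show "summable (\<lambda>n. 0::real)" by simp
    fix n
    have "hg (n + N) * (-t)^(n + N) = ((-1)^(n+N) * hg (n + N)) * t^(n+N)"
      by (rule hg_neg)
    also have "\<dots> \<le> 0" by (rule mult_nonpos_nonneg[OF hg_sign]) (use N t in auto)
    finally show "hg (n + N) * (-t)^(n + N) \<le> 0" .
  qed
  hence "sqrt (1 - t) - (\<Sum>n<N. hg n * (-t)^n) \<le> 0" using sums_unique[OF tail] by simp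
  moreover have "0 \<le> sqrt (1 - t)" using t by simp
  ultimately have A: "0 \<le> (\<Sum>n<N. hg n * (-t)^n)" by linarith
  have "(\<Sum>n<N. \<bar>hg n\<bar> * t^n) = (\<Sum>n<N. (if n = 0 then 2 else 0) - hg n * (-t)^n)"
  proof (rule sum.cong[OF refl])
    fix n assume "n \<in> {..<N}"
    show "\<bar>hg n\<bar> * t^n = (if n = 0 then 2 else 0) - hg n * (-t)^n"
    proof (cases "n = 0")
      case False
      hence n1: "n \<ge> 1" by simp
      have "\<bar>hg n\<bar> * t^n = - ((-1)^n * hg n) * t^n" by (simp only: hg_abs[OF n1])
      also have "\<dots> = - (hg n * (-t)^n)" by (simp only: hg_neg mult_minus_left)
      also have "\<dots> = (if n = 0 then 2 else 0) - hg n * (-t)^n" using False by (simp only: if_False diff_0)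
      finally show ?thesis .
    qed simp
  qed
  also have "\<dots> = (\<Sum>n<N. (if n = 0 then 2 else 0)) - (\<Sum>n<N. hg n * (-t)^n)" by (rule sum_subtractf)
  also have "\<dots> \<le> 2"
  proof -
    have "(\<Sum>n<N. (if n = 0 then 2 else (0::real))) = 2"
      using N by (simp add: sum.delta)
    thus ?thesis using A by linarith
  qed
  finally show ?thesis .
qed


lemma hg_sum_le: "(\<Sum>n<N. \<bar>hg n\<bar>) \<le> 2"
proof -
  define t where "t k = 1 - inverse (real (Suc k))" for k
  have t1: "t \<longlonglongrightarrow> 1" unfolding t_def
    using tendsto_diff[OF tendsto_const LIMSEQ_inverse_real_of_nat, of 1] by simp
  have "(\<lambda>k. \<Sum>n<N. \<bar>hg n\<bar> * t k ^ n) \<longlonglongrightarrow> (\<Sum>n<N. \<bar>hg n\<bar> * 1 ^ n)"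
    by (intro tendsto_sum tendsto_mult tendsto_const tendsto_power t1)
  moreover have "\<exists>M. \<forall>k\<ge>M. (\<Sum>n<N. \<bar>hg n\<bar> * t k ^ n) \<le> 2"
  proof (intro exI allI impI)
    fix k :: nat
    have "0 \<le> t k" "t k < 1" unfolding t_def by (auto simp: field_simps)
    thus "(\<Sum>n<N. \<bar>hg n\<bar> * t k ^ n) \<le> 2" by (rule hg_partial_bound)
  qed
  ultimately have "(\<Sum>n<N. \<bar>hg n\<bar> * 1 ^ n) \<le> 2" by (rule LIMSEQ_le_const2)
  thus ?thesis by simp
qed

lemma hg_summable: "summable (\<lambda>n. \<bar>hg n\<bar>)"
  by (rule summableI_nonneg_bounded[of _ 2]) (simp_all add: hg_sum_le)

lemma hg_suminf: "(\<Sum>n. \<bar>hg n\<bar>) \<le> 2"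
  by (rule suminf_le_const[OF hg_summable hg_sum_le])

definition csq :: "'a::cstar_algebra \<Rightarrow> 'a" where
  "csq w = (\<Sum>n. hg n *\<^sub>R w^n)"

lemma csq_term_bound: "norm (w::'a::cstar_algebra) \<le> 1 \<Longrightarrow> norm (hg n *\<^sub>R w^n) \<le> \<bar>hg n\<bar>"
proof -
  assume w: "norm w \<le> 1"
  have "norm (hg n *\<^sub>R w^n) \<le> \<bar>hg n\<bar> * norm w ^ n" by (simp add: norm_power_ineq mult_left_mono)
  also have "\<dots> \<le> \<bar>hg n\<bar> * 1" using w by (intro mult_left_mono power_le_one) auto
  finally show ?thesis by simp
qed

lemma csq_summable: "norm (w::'a::cstar_algebra) \<le> 1 \<Longrightarrow> summable (\<lambda>n. norm (hg n *\<^sub>R w^n))"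
  by (rule summable_comparison_test[OF _ hg_summable]) (use csq_term_bound in fastforce)

lemma csq_square:
  fixes w :: "'a::cstar_algebra"
  assumes w: "norm w \<le> 1"
  shows "csq w * csq w = 1 + w"
proof -
  have "csq w * csq w = (\<Sum>k. \<Sum>i\<le>k. (hg i *\<^sub>R w^i) * (hg (k - i) *\<^sub>R w^(k - i)))"
    unfolding csq_def by (rule Cauchy_product[OF csq_summable[OF w] csq_summable[OF w]])
  also have "\<dots> = (\<Sum>k. (if k \<le> 1 then 1 else 0) *\<^sub>R w^k)"
  proof (rule suminf_cong)
    fix k
    have "(\<Sum>i\<le>k. (hg i *\<^sub>R w^i) * (hg (k - i) *\<^sub>R w^(k - i))) = (\<Sum>i\<le>k. (hg i * hg (k - i)) *\<^sub>R w^k)"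
    proof (rule sum.cong[OF refl])
      fix i assume "i \<in> {..k}"
      hence "w^i * w^(k-i) = w^k" by (simp add: power_add[symmetric])
      thus "(hg i *\<^sub>R w^i) * (hg (k - i) *\<^sub>R w^(k - i)) = (hg i * hg (k - i)) *\<^sub>R w^k" by simp
    qed
    also have "\<dots> = (\<Sum>i\<le>k. hg i * hg (k - i)) *\<^sub>R w^k" by (simp add: scaleR_sum_left)
    also have "\<dots> = (if k \<le> 1 then 1 else 0) *\<^sub>R w^k" by (simp only: hg_vandermonde)
    finally show "(\<Sum>i\<le>k. (hg i *\<^sub>R w^i) * (hg (k - i) *\<^sub>R w^(k - i))) = (if k \<le> 1 then 1 else 0) *\<^sub>R w^k" .
  qed
  also have "\<dots> = (\<Sum>k\<in>{0,1}. (if k \<le> 1 then 1 else 0) *\<^sub>R w^k)" by (rule suminf_finite) auto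
  also have "\<dots> = 1 + w" by simp
  finally show ?thesis .
qed

lemma csq_adj:
  fixes w :: "'a::cstar_algebra"
  assumes w: "norm w \<le> 1" and sa: "adj w = w"
  shows "adj (csq w) = csq w"
proof -
  have s: "summable (\<lambda>n. hg n *\<^sub>R w^n)" by (rule summable_norm_cancel[OF csq_summable[OF w]])
  show ?thesis unfolding csq_def bounded_linear.suminf[OF bounded_linear_adj s]
    by (simp add: adj_scaleR adj_power sa)
qed

lemma csq_comm:
  fixes w c :: "'a::cstar_algebra"
  assumes w: "norm w \<le> 1" and cw: "c * w = w * c"
  shows "c * csq w = csq w * c"
proof -
  have s: "summable (\<lambda>n. hg n *\<^sub>R w^n)" by (rule summable_norm_cancel[OF csq_summable[OF w]])
  have "c * csq w = (\<Sum>n. c * (hg n *\<^sub>R w^n))" unfolding csq_def by (rule suminf_mult[OF s, symmetric])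
  also have "\<dots> = (\<Sum>n. (hg n *\<^sub>R w^n) * c)" using commute_power[OF cw] by simp
  also have "\<dots> = csq w * c" unfolding csq_def by (rule suminf_mult2[OF s, symmetric])
  finally show ?thesis .
qed

lemma csq_norm:
  fixes w :: "'a::cstar_algebra"
  assumes w: "norm w \<le> 1"
  shows "norm (1 - csq w) \<le> 1"
proof -
  have s: "summable (\<lambda>n. hg n *\<^sub>R w^n)" by (rule summable_norm_cancel[OF csq_summable[OF w]])
  have "csq w - 1 = (\<Sum>n. hg (Suc n) *\<^sub>R w^(Suc n))"
    unfolding csq_def using suminf_split_head[OF s] by simp
  hence "norm (1 - csq w) = norm (\<Sum>n. hg (Suc n) *\<^sub>R w^(Suc n))" by (metis norm_minus_commute)
  also have "\<dots> \<le> (\<Sum>n. \<bar>hg (Suc n)\<bar>)"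
    by (rule norm_suminf_le[OF csq_term_bound[OF w]]) (rule summable_Suc_iff[THEN iffD2, OF hg_summable])
  also have "\<dots> = (\<Sum>n. \<bar>hg n\<bar>) - 1" using suminf_split_head[OF hg_summable] by simp
  also have "\<dots> \<le> 1" using hg_suminf by simp
  finally show ?thesis .
qed

lemma csq_pos:
  fixes w :: "'a::cstar_algebra"
  assumes w: "norm w \<le> 1" and sa: "adj w = w"
  shows "cpositive (csq w)"
  by (rule positive_of_norm[where t=1]) (use csq_adj[OF w sa] csq_norm[OF w] in simp_all)

lemma pos_sqrt:
  fixes P :: "'a::cstar_algebra"
  assumes P: "cpositive P"
  shows "\<exists>S. cpositive S \<and> S * S = P \<and> (\<forall>c. c * P = P * c \<longrightarrow> c * S = S * c)"
proof (cases "P = 0")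
  case True thus ?thesis using cpositive_zero by (intro exI[of _ 0]) auto
next
  case False
  define t where "t = norm P"
  have t0: "0 < t" unfolding t_def using False by simp
  define Q where "Q = (1/t) *\<^sub>R P"
  have Qp: "cpositive Q" unfolding Q_def using P t0 by (intro cpositive_scaleR) auto
  have nQ: "norm Q = 1" unfolding Q_def t_def using False by simp
  define w where "w = Q - 1"
  have nw: "norm w \<le> 1"
    using cpositive_norm[OF Qp, of 1] nQ unfolding w_def by (simp add: norm_minus_commute)
  have saw: "adj w = w" using Qp unfolding w_def cpositive_def by (simp add: adj_diff)
  define S where "S = sqrt t *\<^sub>R csq w"
  have "cpositive S" unfolding S_def using csq_pos[OF nw saw] t0 by (intro cpositive_scaleR) auto
  moreover have "S * S = P"
  proof -
    have "S * S = (sqrt t * sqrt t) *\<^sub>R (csq w * csq w)" unfolding S_def by simp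
    also have "\<dots> = t *\<^sub>R Q" using csq_square[OF nw] t0 unfolding w_def by simp
    also have "\<dots> = P" unfolding Q_def using t0 by simp
    finally show ?thesis .
  qed
  moreover have "c * S = S * c" if c: "c * P = P * c" for c
  proof -
    have "c * w = w * c" using c unfolding w_def Q_def by (simp add: algebra_simps)
    thus ?thesis unfolding S_def using csq_comm[OF nw] by simp
  qed
  ultimately show ?thesis by blast
qed


lemma jacobson:
  fixes p q :: "'a::cstar_algebra"
  assumes i: "cinvertible (1 - p * q)"
  shows "cinvertible (1 - q * p)"
proof -
  define W where "W = cinv (1 - p * q)"
  have r: "(1 - p * q) * W = 1" and l: "W * (1 - p * q) = 1" unfolding W_def using cinv_right[OF i] cinv_left[OF i] by auto
  have r': "W - p * q * W = 1" using r by (simp add: algebra_simps)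
  have l': "W - W * p * q = 1" using l by (simp add: algebra_simps mult.assoc)
  have "(1 - q * p) * (1 + q * W * p) = 1 - q * p + q * (W - p * q * W) * p"
    by (simp add: algebra_simps mult.assoc)
  also have "\<dots> = 1" using r' by simp
  finally have A: "(1 - q * p) * (1 + q * W * p) = 1" .
  have "(1 + q * W * p) * (1 - q * p) = 1 - q * p + q * (W - W * p * q) * p"
    by (simp add: algebra_simps mult.assoc)
  also have "\<dots> = 1" using l' by simp
  finally have B: "(1 + q * W * p) * (1 - q * p) = 1" .
  from A B show ?thesis by (rule cinvertibleI)
qed

lemma spec_swap:
  fixes p q :: "'a::cstar_algebra"
  assumes mu: "\<mu> \<in> cspectrum (q * p)" and m0: "\<mu> \<noteq> 0"
  shows "\<mu> \<in> cspectrum (p * q)"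
proof (rule ccontr)
  assume "\<mu> \<notin> cspectrum (p * q)"
  hence i: "cinvertible (p * q - cscale \<mu> 1)" by (simp add: spec_iff)
  define p' where "p' = cscale (inverse \<mu>) p"
  have e1: "p * q - cscale \<mu> 1 = cscale (-\<mu>) (1 - p' * q)"
    unfolding p'_def using m0 by (simp add: cscale_diff_right cscale_cscale cscale_mult_left cscale_minus_left cscale_one)
  have e2: "q * p - cscale \<mu> 1 = cscale (-\<mu>) (1 - q * p')"
    unfolding p'_def using m0 by (simp add: cscale_diff_right cscale_cscale cscale_mult_right cscale_minus_left cscale_one)
  have "cinvertible (cscale (-\<mu>) (1 - p' * q))" using i e1 by simp
  hence "cinvertible (1 - p' * q)" using cinvertible_cscale_iff[of "-\<mu>" "1 - p' * q"] m0 by simp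
  hence "cinvertible (1 - q * p')" by (rule jacobson)
  hence "cinvertible (q * p - cscale \<mu> 1)" using e2 cinvertible_cscale_iff[of "-\<mu>" "1 - q * p'"] m0 by simp
  thus False using mu by (simp add: spec_iff)
qed

lemma spec_neg: "z \<in> cspectrum (- (x::'a::cstar_algebra)) \<longleftrightarrow> -z \<in> cspectrum x"
proof -
  have eq: "- x - cscale z 1 = - (x - cscale (-z) 1)" by (simp add: cscale_minus_left)
  show ?thesis by (simp only: spec_iff eq cinvertible_minus)
qed

lemma uv_pos:
  fixes u v :: "'a::cstar_algebra"
  assumes su: "adj u = u" and uv: "u * v = 0" and vu: "v * u = 0" and p: "cpositive (u + v)"
  shows "cpositive u"
  unfolding cpositive_iff
proof (rule conjI[OF su], rule ballI)
  fix \<mu> assume mu: "\<mu> \<in> cspectrum u"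
  have im: "Im \<mu> = 0" by (rule spec_real[OF su mu])
  show "Im \<mu> = 0 \<and> 0 \<le> Re \<mu>"
  proof (cases "\<mu> = 0")
    case True thus ?thesis by simp
  next
    case m0: False
    have e1: "(u - cscale \<mu> 1) * (v - cscale \<mu> 1) = cscale (-\<mu>) ((u + v) - cscale \<mu> 1)"
      using uv by (simp add: algebra_simps cscale_one_mult mult_cscale_one cscale_cscale cscale_minus_left cscale_diff_right cscale_add_right)
    have e2: "(v - cscale \<mu> 1) * (u - cscale \<mu> 1) = cscale (-\<mu>) ((u + v) - cscale \<mu> 1)"
      using vu by (simp add: algebra_simps cscale_one_mult mult_cscale_one cscale_cscale cscale_minus_left cscale_diff_right cscale_add_right)
    have "\<mu> \<in> cspectrum (u + v)"
    proof (rule ccontr)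
      assume "\<mu> \<notin> cspectrum (u + v)"
      hence "cinvertible (cscale (-\<mu>) ((u + v) - cscale \<mu> 1))" using m0
        by (simp add: spec_iff cinvertible_cscale)
      hence "cinvertible (u - cscale \<mu> 1)"
        using cinvertible_commute_factor[of "u - cscale \<mu> 1" "v - cscale \<mu> 1"] e1 e2 by simp
      thus False using mu by (simp add: spec_iff)
    qed
    thus ?thesis using p unfolding cpositive_iff by blast
  qed
qed


lemma half_add1: "(1/2) *\<^sub>R a + ((1/2) *\<^sub>R a + b) = a + (b::'a::real_vector)"
  by (simp add: add.assoc[symmetric] scaleR_add_left[symmetric])

lemma half_add2: "(1/2) *\<^sub>R a + (1/2) *\<^sub>R a = (a::'a::real_vector)"
  by (simp add: scaleR_add_left[symmetric])

lemma hk_identity: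
  fixes y :: "'a::cstar_algebra"
  defines "h \<equiv> (1/2) *\<^sub>R (y + adj y)" and "k \<equiv> cscale (- \<i> / 2) (y - adj y)"
  shows "adj y * y + y * adj y = 2 *\<^sub>R (h * h) + 2 *\<^sub>R (k * k)" and "adj h = h" and "adj k = k"
proof -
  have kk: "k * k = (-1/4) *\<^sub>R ((y - adj y) * (y - adj y))"
    unfolding k_def by (simp add: cscale_mult_left cscale_mult_right cscale_cscale flip: cscale_of_real)
  show "adj y * y + y * adj y = 2 *\<^sub>R (h * h) + 2 *\<^sub>R (k * k)"
    unfolding kk h_def by (simp add: algebra_simps scaleR_add_right half_add1 half_add2)
  show "adj h = h" unfolding h_def by (simp add: adj_scaleR adj_add adj_adj add.commute)
  have "adj k = cscale (\<i>/2) (adj y - y)" unfolding k_def by (simp add: adj_cscale adj_diff adj_adj)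
  also have "adj y - y = - (y - adj y)" by simp
  also have "cscale (\<i>/2) (- (y - adj y)) = k" unfolding k_def cscale_minus_right
    by (simp add: cscale_minus_left[symmetric])
  finally show "adj k = k" .
qed

lemma selfadj_zero: "adj (a::'a::cstar_algebra) = a \<Longrightarrow> a * a = 0 \<Longrightarrow> a = 0"
  using adj_selfadj_sq[of a] by simp

lemma cpositive_star: "cpositive (adj x * (x::'a::cstar_algebra))"
proof -
  define a where "a = adj x * x"
  have sa: "adj a = a" unfolding a_def by (simp add: adj_mult adj_adj)
  obtain r where r: "cpositive r" "r * r = a * a" "\<And>c. c * (a * a) = (a * a) * c \<Longrightarrow> c * r = r * c"
    using pos_sqrt[OF cpositive_sq[OF sa]] by blast
  have ra: "a * r = r * a" using r(3)[of a] by (simp add: mult.assoc)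
  have sr: "adj r = r" using r(1) by (simp add: cpositive_def)
  define u where "u = r + a"
  define v where "v = r - a"
  have uv: "u * v = 0" unfolding u_def v_def using r(2) ra by (simp add: algebra_simps)
  have vu: "v * u = 0" unfolding u_def v_def using r(2) ra by (simp add: algebra_simps)
  have su: "adj u = u" unfolding u_def using sa sr by (simp add: adj_add)
  have sv: "adj v = v" unfolding v_def using sa sr by (simp add: adj_diff)
  have uvp: "cpositive (u + v)"
  proof -
    have "u + v = 2 *\<^sub>R r" unfolding u_def v_def by (simp add: scaleR_2)
    thus ?thesis using cpositive_scaleR[OF r(1), of 2] by simp
  qed
  have up: "cpositive u" by (rule uv_pos[OF su uv vu uvp])
  have vp: "cpositive v" by (rule uv_pos[OF sv vu uv]) (use uvp in \<open>simp add: add.commute\<close>)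
  define am where "am = (1/2) *\<^sub>R v"
  define ap where "ap = (1/2) *\<^sub>R u"
  have amp: "cpositive am" unfolding am_def by (rule cpositive_scaleR[OF vp]) simp
  have sam: "adj am = am" using amp by (simp add: cpositive_def)
  have a_eq: "a = ap - am"
  proof -
    have "u - v = 2 *\<^sub>R a" unfolding u_def v_def by (simp add: scaleR_2)
    hence "ap - am = (1/2) *\<^sub>R (2 *\<^sub>R a)" unfolding ap_def am_def by (simp only: scaleR_diff_right[symmetric])
    thus ?thesis by simp
  qed
  have apam: "ap * am = 0" unfolding ap_def am_def using uv by simp
  have amap: "am * ap = 0" unfolding ap_def am_def using vu by simp
  obtain s where s: "cpositive s" "s * s = am" "\<And>c. c * am = am * c \<Longrightarrow> c * s = s * c"
    using pos_sqrt[OF amp] by blast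
  have sam_c: "am * s = s * am" using s(3)[of am] by simp
  have ss: "adj s = s" using s(1) by (simp add: cpositive_def)
  define y where "y = x * am"
  have yy: "adj y * y = - (am * am * am)"
  proof -
    have "adj y * y = am * a * am" unfolding y_def a_def by (simp add: adj_mult sam mult.assoc)
    also have "\<dots> = am * ap * am - am * am * am" unfolding a_eq by (simp add: algebra_simps)
    also have "\<dots> = - (am * am * am)" using amap by simp
    finally show ?thesis .
  qed
  have p1: "cpositive (- (adj y * y))"
  proof -
    have "am * am * am = (s * am) * (s * am)"
      using s(2) sam_c by (metis mult.assoc)
    moreover have "adj (s * am) = s * am" using sam ss sam_c by (simp add: adj_mult)
    ultimately show ?thesis using yy cpositive_sq by simp
  qed
  define h where "h = (1/2) *\<^sub>R (y + adj y)"
  define k where "k = cscale (- \<i> / 2) (y - adj y)"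
  have HK: "adj y * y + y * adj y = 2 *\<^sub>R (h * h) + 2 *\<^sub>R (k * k)" "adj h = h" "adj k = k"
    unfolding h_def k_def by (rule hk_identity)+
  have p2: "cpositive (y * adj y)"
  proof -
    have eq: "y * adj y = 2 *\<^sub>R (h * h) + 2 *\<^sub>R (k * k) + (- (adj y * y))" using HK(1) by (simp add: algebra_simps)
    have "cpositive (2 *\<^sub>R (h * h) + 2 *\<^sub>R (k * k))"
      by (intro cpositive_add cpositive_scaleR cpositive_sq HK(2,3)) auto
    thus ?thesis unfolding eq using p1 by (rule cpositive_add)
  qed
  have syy: "adj (adj y * y) = adj y * y" by (simp add: adj_mult adj_adj)
  have "norm (adj y * y) \<le> 0"
  proof (rule norm_le_specrad[OF syy order_refl])
    fix \<mu> assume mu: "\<mu> \<in> cspectrum (adj y * y)"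
    have "- \<mu> \<in> cspectrum (- (adj y * y))" using mu by (simp add: spec_neg)
    hence A: "Im \<mu> = 0 \<and> Re \<mu> \<le> 0" using p1 unfolding cpositive_iff by fastforce
    show "cmod \<mu> \<le> 0"
    proof (rule ccontr)
      assume "\<not> cmod \<mu> \<le> 0"
      hence m0: "\<mu> \<noteq> 0" by auto
      have "\<mu> \<in> cspectrum (y * adj y)" by (rule spec_swap[OF mu m0])
      hence "Re \<mu> \<ge> 0" using p2 unfolding cpositive_iff by blast
      hence "\<mu> = 0" using A by (simp add: complex_eq_iff)
      thus False using m0 by simp
    qed
  qed
  hence "adj y * y = 0" by simp
  hence "y = 0" using cstar_identity[of y] by simp
  hence "a * am = 0" unfolding y_def a_def by (simp add: mult.assoc)
  hence "am * am = 0" unfolding a_eq using apam by (simp add: algebra_simps)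
  hence "am = 0" by (rule selfadj_zero[OF sam])
  hence "a = ap" using a_eq by simp
  moreover have "cpositive ap" unfolding ap_def by (rule cpositive_scaleR[OF up]) simp
  ultimately show ?thesis unfolding a_def by simp
qed


context
  fixes \<Phi> :: "'a::cstar_algebra \<Rightarrow> 'b::cstar_algebra"
  assumes pl: "positive_linear_map \<Phi>"
begin

lemma phi_add: "\<Phi> (x + y) = \<Phi> x + \<Phi> y" using pl by (simp add: positive_linear_map_def)
lemma phi_cscale: "\<Phi> (cscale c x) = cscale c (\<Phi> x)" using pl by (simp add: positive_linear_map_def)
lemma phi_pos: "cpositive x \<Longrightarrow> cpositive (\<Phi> x)" using pl by (simp add: positive_linear_map_def)
lemma phi_zero: "\<Phi> 0 = 0" using phi_cscale[of 0 0] by simp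
lemma phi_minus: "\<Phi> (- x) = - \<Phi> x" using phi_cscale[of "-1" x] by (simp add: cscale_minus_left cscale_one)
lemma phi_diff: "\<Phi> (x - y) = \<Phi> x - \<Phi> y" using phi_add[of x "-y"] by (simp add: phi_minus)
lemma phi_scaleR: "\<Phi> (r *\<^sub>R x) = r *\<^sub>R \<Phi> x" using phi_cscale[of "complex_of_real r" x] by (simp add: cscale_of_real)

lemma phi_sa: "adj h = h \<Longrightarrow> adj (\<Phi> h) = \<Phi> h"
proof -
  assume h: "adj h = h"
  define p where "p = norm h *\<^sub>R 1 + h"
  define q where "q = norm h *\<^sub>R (1::'a)"
  have pp: "cpositive p" unfolding p_def by (rule cpositive_shift[OF h])
  have qp: "cpositive q" unfolding q_def by (rule cpositive_scaleR[OF cpositive_one]) simp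
  have "h = p - q" unfolding p_def q_def by simp
  hence "\<Phi> h = \<Phi> p - \<Phi> q" by (simp add: phi_diff)
  thus ?thesis using phi_pos[OF pp] phi_pos[OF qp] by (simp add: cpositive_def adj_diff)
qed

lemma phi_adj: "\<Phi> (adj x) = adj (\<Phi> x)"
proof -
  define h where "h = (1/2) *\<^sub>R (x + adj x)"
  define k where "k = cscale (- \<i> / 2) (x - adj x)"
  have hk: "adj h = h" "adj k = k" unfolding h_def k_def using hk_identity by blast+
  have c: "\<i> * (- \<i> / 2) = complex_of_real (1/2)" by (simp add: complex_eq_iff)
  have "h + cscale \<i> k = (1/2) *\<^sub>R ((x + adj x) + (x - adj x))"
    unfolding h_def k_def cscale_cscale c cscale_of_real scaleR_add_right ..
  also have "(x + adj x) + (x - adj x) = 2 *\<^sub>R x" by (simp add: scaleR_2)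
  finally have x: "x = h + cscale \<i> k" by simp
  have ax: "adj x = h - cscale \<i> k"
    using arg_cong[OF x, of adj] hk by (simp add: adj_add adj_cscale cscale_minus_left)
  have "\<Phi> (adj x) = \<Phi> h - cscale \<i> (\<Phi> k)" unfolding ax by (simp add: phi_diff phi_cscale)
  also have "\<dots> = adj (\<Phi> h + cscale \<i> (\<Phi> k))"
    using phi_sa[OF hk(1)] phi_sa[OF hk(2)] by (simp add: adj_add adj_cscale cscale_minus_left)
  also have "\<Phi> h + cscale \<i> (\<Phi> k) = \<Phi> x" using x by (simp add: phi_add phi_cscale)
  finally show ?thesis .
qed

end


theorem lemma3p13:
  fixes \<Phi> :: "'a::cstar_algebra \<Rightarrow> 'b::cstar_algebra"
    and A :: 'a and \<alpha> :: complex
  assumes "positive_linear_map \<Phi>"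
    and "cinvertible (\<Phi> 1)"
  shows "cle (\<Phi> (adj A * A) - adj (\<Phi> A) * cinv (\<Phi> 1) * \<Phi> A)
             (\<Phi> (adj (A - cscale \<alpha> 1) * (A - cscale \<alpha> 1)))"
proof -
  note pl = assms(1) and inv = assms(2)
  define u where "u = \<Phi> 1"
  define a where "a = \<Phi> A"
  define P where "P = cinv u"
  have up: "cpositive u" unfolding u_def by (rule phi_pos[OF pl cpositive_one])
  have Pp: "cpositive P" unfolding P_def by (rule cpositive_inv[OF up inv[folded u_def]])
  have su: "adj u = u" using up by (simp add: cpositive_def)
  have Pu: "P * u = 1" unfolding P_def using cinv_left[OF inv[folded u_def]] .
  have uP: "u * P = 1" unfolding P_def using cinv_right[OF inv[folded u_def]] .
  have Pu': "P * (u * z) = z" for z using Pu by (metis mult.assoc mult_1_left)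
  have uP': "u * (P * z) = z" for z using uP by (metis mult.assoc mult_1_left)
  obtain S where S: "cpositive S" "S * S = P" using pos_sqrt[OF Pp] by blast
  have sS: "adj S = S" using S(1) by (simp add: cpositive_def)
  define D where "D = a - cscale \<alpha> u"
  have e1: "adj (A - cscale \<alpha> 1) * (A - cscale \<alpha> 1) =
      adj A * A - cscale \<alpha> (adj A) - cscale (cnj \<alpha>) A + cscale (cnj \<alpha> * \<alpha>) 1"
    by (simp add: adj_diff adj_cscale algebra_simps cscale_one_mult mult_cscale_one cscale_cscale
        cscale_diff_right mult.commute)
  have e2: "\<Phi> (adj (A - cscale \<alpha> 1) * (A - cscale \<alpha> 1)) =
      \<Phi> (adj A * A) - cscale \<alpha> (adj a) - cscale (cnj \<alpha>) a + cscale (cnj \<alpha> * \<alpha>) u"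
    unfolding e1 a_def u_def by (simp add: phi_add[OF pl] phi_diff[OF pl] phi_cscale[OF pl] phi_adj[OF pl])
  have e3: "adj (S * D) * (S * D) = adj a * P * a - cscale \<alpha> (adj a) - cscale (cnj \<alpha>) a + cscale (cnj \<alpha> * \<alpha>) u"
  proof -
    have "adj (S * D) * (S * D) = adj D * P * D" using S(2)[symmetric] sS by (simp add: adj_mult mult.assoc)
    also have "adj D = adj a - cscale (cnj \<alpha>) u" unfolding D_def by (simp add: adj_diff adj_cscale su)
    also have "(adj a - cscale (cnj \<alpha>) u) * P * D =
        adj a * P * a - cscale \<alpha> (adj a) - cscale (cnj \<alpha>) a + cscale (cnj \<alpha> * \<alpha>) u"
      unfolding D_def by (simp add: algebra_simps cscale_mult_left cscale_mult_right cscale_cscale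
          Pu Pu' uP uP' cscale_diff_right mult.commute)
    finally show ?thesis .
  qed
  have "\<Phi> (adj (A - cscale \<alpha> 1) * (A - cscale \<alpha> 1)) - (\<Phi> (adj A * A) - adj (\<Phi> A) * cinv (\<Phi> 1) * \<Phi> A)
      = adj (S * D) * (S * D)"
    unfolding e2 e3 by (simp add: a_def u_def P_def)
  thus ?thesis unfolding cle_def using cpositive_star by metis
qed


end
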